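(* Let $G$ be a connected graph on $n$ vertices with $2\leq n\leq 7$. If $\psi_{n-1}(G)=2$, then $\psi_n(G)=1$.
   Context: All graphs are finite and simple. For a graph $G$ and a positive integer $k$, a $k$-path vertex cover ($k$-PVC) of $G$ is a set $S$ of vertices such that every path on $k$ vertices in $G$ contains at least one vertex of $S$ (if $G$ has no path on $k$ vertices, the empty set is a $k$-PVC). $\psi_k(G)$ denotes the minimum cardinality of a $k$-PVC of $G$. *)

theory Defs
  imports Main
begin

definition simple_graph :: "'a set \<Rightarrow> ('a \<Rightarrow> 'a \<Rightarrow> bool) \<Rightarrow> bool" where
  "simple_graph V E \<longleftrightarrow> finite V \<and> (\<forall>x y. E x y \<longrightarrow> x \<in> V \<and> y \<in> V)
     \<and> (\<forall>x y. E x y \<longrightarrow> E y x) \<and> (\<forall>x. \<not> E x x)"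

text \<open>A path in G, given by its vertex sequence (distinct vertices, consecutive ones adjacent).
  A path on k vertices is such a list of length k.\<close>
definition is_path :: "'a set \<Rightarrow> ('a \<Rightarrow> 'a \<Rightarrow> bool) \<Rightarrow> 'a list \<Rightarrow> bool" where
  "is_path V E xs \<longleftrightarrow> xs \<noteq> [] \<and> distinct xs \<and> set xs \<subseteq> V
     \<and> (\<forall>i. Suc i < length xs \<longrightarrow> E (xs ! i) (xs ! Suc i))"

definition connected_graph :: "'a set \<Rightarrow> ('a \<Rightarrow> 'a \<Rightarrow> bool) \<Rightarrow> bool" where
  "connected_graph V E \<longleftrightarrow> V \<noteq> {} \<and>
     (\<forall>u\<in>V. \<forall>v\<in>V. \<exists>xs. is_path V E xs \<and> hd xs = u \<and> last xs = v)"

definition is_kpvc :: "'a set \<Rightarrow> ('a \<Rightarrow> 'a \<Rightarrow> bool) \<Rightarrow> nat \<Rightarrow> 'a set \<Rightarrow> bool" where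
  "is_kpvc V E k S \<longleftrightarrow> S \<subseteq> V \<and>
     (\<forall>xs. is_path V E xs \<and> length xs = k \<longrightarrow> set xs \<inter> S \<noteq> {})"

definition psi :: "'a set \<Rightarrow> ('a \<Rightarrow> 'a \<Rightarrow> bool) \<Rightarrow> nat \<Rightarrow> nat" where
  "psi V E k = (LEAST m. \<exists>S. is_kpvc V E k S \<and> card S = m)"

end

theory Submission imports Defs begin

lemma succ_nth: "(\<forall>i. Suc i < length xs \<longrightarrow> P (xs!i) (xs!Suc i)) \<longleftrightarrow> successively P xs"
proof (induction P xs rule: successively.induct)
  case (3 P x y xs)
  have "(\<forall>i. Suc i < length (x#y#xs) \<longrightarrow> P ((x#y#xs)!i) ((x#y#xs)!Suc i)) \<longleftrightarrow>
     P x y \<and> (\<forall>i. Suc i < length (y#xs) \<longrightarrow> P ((y#xs)!i) ((y#xs)!Suc i))"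
    (is "?L \<longleftrightarrow> ?R")
  proof
    assume ?L
    then show ?R
      by (metis Suc_less_eq length_Cons nth_Cons_0 nth_Cons_Suc zero_less_Suc)
  next
    assume ?R
    then show ?L
      by (metis Suc_less_eq length_Cons nth_Cons_0 nth_Cons_Suc not0_implies_Suc)
  qed
  then show ?case using 3 by simp
qed auto

lemma is_path_alt: "is_path V E xs \<longleftrightarrow> xs \<noteq> [] \<and> distinct xs \<and> set xs \<subseteq> V \<and> successively E xs"
  unfolding is_path_def succ_nth ..

lemma path_cons: "is_path V E xs \<Longrightarrow> v \<in> V \<Longrightarrow> v \<notin> set xs \<Longrightarrow> E v (hd xs) \<Longrightarrow> is_path V E (v # xs)"
  unfolding is_path_alt by (auto simp: successively_Cons)

lemma path_snoc: "is_path V E xs \<Longrightarrow> v \<in> V \<Longrightarrow> v \<notin> set xs \<Longrightarrow> E (last xs) v \<Longrightarrow> is_path V E (xs @ [v])"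
  unfolding is_path_alt by (auto simp: successively_append_iff)

lemma path_ins: "is_path V E xs \<Longrightarrow> v \<in> V \<Longrightarrow> v \<notin> set xs \<Longrightarrow> Suc j < length xs \<Longrightarrow>
   E (xs!j) v \<Longrightarrow> E v (xs!Suc j) \<Longrightarrow> is_path V E (take (Suc j) xs @ v # drop (Suc j) xs)"
proof -
  assume a: "is_path V E xs" "v \<in> V" "v \<notin> set xs" "Suc j < length xs" "E (xs!j) v" "E v (xs!Suc j)"
  have l: "last (take (Suc j) xs) = xs!j" using a(4) by (simp add: take_Suc_conv_app_nth)
  have h: "hd (drop (Suc j) xs) = xs!Suc j" using a(4) by (simp add: hd_drop_conv_nth)
  have s: "successively E (take (Suc j) xs @ drop (Suc j) xs)" using a(1) by (simp add: is_path_alt)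
  have d: "distinct (take (Suc j) xs @ drop (Suc j) xs)" using a(1) by (simp add: is_path_alt)
  have d2: "distinct (take (Suc j) xs) \<and> distinct (drop (Suc j) xs) \<and> set (take (Suc j) xs) \<inter> set (drop (Suc j) xs) = {}"
    using d by (simp only: distinct_append)
  have st: "set (take (Suc j) xs) \<subseteq> set xs" "set (drop (Suc j) xs) \<subseteq> set xs"
    by (auto dest: in_set_takeD in_set_dropD)
  show ?thesis
    unfolding is_path_alt using s d2 a(1,2,3,4) st l h a(5,6)
    apply (simp only: successively_append_iff successively_Cons)
    apply (auto simp del: append_take_drop_id simp: is_path_alt)
    done
qed

lemma ham_set: "simple_graph V E \<Longrightarrow> is_path V E xs \<Longrightarrow> length xs = card V \<Longrightarrow> set xs = V"
  unfolding simple_graph_def is_path_def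
  by (metis card_subset_eq distinct_card)

lemma avoid_set: "simple_graph V E \<Longrightarrow> is_path V E xs \<Longrightarrow> length xs = card V - 1 \<Longrightarrow> v \<in> V \<Longrightarrow> v \<notin> set xs \<Longrightarrow> set xs = V - {v}"
proof -
  assume a: "simple_graph V E" "is_path V E xs" "length xs = card V - 1" "v \<in> V" "v \<notin> set xs"
  have f: "finite V" using a(1) by (simp add: simple_graph_def)
  have sub: "set xs \<subseteq> V - {v}" using a(2,5) by (auto simp: is_path_def)
  have "card (set xs) = card (V - {v})" using a(2,3,4) f by (simp add: is_path_def distinct_card)
  then show ?thesis using sub f by (simp add: card_subset_eq)
qed

lemma nbr_pos:
  assumes "simple_graph V E" "is_path V E P" "v \<in> V" "v \<notin> set P"
    and nh: "\<not>(\<exists>xs. is_path V E xs \<and> length xs = Suc (length P))"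
    and "j < length P" "E v (P!j)"
  shows "0 < j \<and> Suc j < length P"
proof (rule ccontr)
  assume "\<not> (0 < j \<and> Suc j < length P)"
  then consider "j = 0" | "j = length P - 1" using assms(6) by linarith
  then show False
  proof cases
    case 1
    have "hd P = P!j" using 1 assms(2) by (simp add: is_path_def hd_conv_nth)
    then have "is_path V E (v # P)" using path_cons assms by metis
    then show False using nh by fastforce
  next
    case 2
    have "last P = P!j" using 2 assms(2) by (simp add: is_path_def last_conv_nth)
    then have "E (last P) v" using assms(1,7) by (simp add: simple_graph_def)
    then have "is_path V E (P @ [v])" using path_snoc assms by metis
    then show False using nh by fastforce
  qed
qed

lemma nbr_adj:
  assumes "simple_graph V E" "is_path V E P" "v \<in> V" "v \<notin> set P"
    and nh: "\<not>(\<exists>xs. is_path V E xs \<and> length xs = Suc (length P))"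
    and "Suc j < length P" "E v (P!j)" "E v (P!Suc j)"
  shows False
proof -
  have "E (P!j) v" using assms(1,7) by (simp add: simple_graph_def)
  then have "is_path V E (take (Suc j) P @ v # drop (Suc j) P)" using path_ins assms by metis
  moreover have "length (take (Suc j) P @ v # drop (Suc j) P) = Suc (length P)" using assms(6) by simp
  ultimately show False using nh by blast
qed

theorem mainTheorem13:
  fixes V :: "'a set" and E :: "'a \<Rightarrow> 'a \<Rightarrow> bool" and n :: nat
  assumes "simple_graph V E" and "connected_graph V E"
    and "card V = n" and "2 \<le> n" and "n \<le> 7"
    and "psi V E (n - 1) = 2"
  shows "psi V E n = 1"
proof -
  note G = assms(1)
  have fin: "finite V" using G by (simp add: simple_graph_def)
  have sym: "\<And>x y. E x y \<Longrightarrow> E y x" and irr: "\<And>x. \<not> E x x"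
    and inV: "\<And>x y. E x y \<Longrightarrow> x \<in> V \<and> y \<in> V"
    using G by (auto simp: simple_graph_def)
  have avoid: "\<exists>P. is_path V E P \<and> length P = n - 1 \<and> v \<notin> set P" if "v \<in> V" for v
  proof (rule ccontr)
    assume na: "\<not> ?thesis"
    have "is_kpvc V E (n - 1) {v}" using na that unfolding is_kpvc_def by auto
    then have "psi V E (n - 1) \<le> 1" unfolding psi_def by (intro Least_le exI[of _ "{v}"]) simp
    then show False using assms(6) by simp
  qed
  have ham: "\<exists>xs. is_path V E xs \<and> length xs = n"
  proof (rule ccontr)
    assume nh0: "\<not> ?thesis"
    have nh: "\<not>(\<exists>xs. is_path V E xs \<and> length xs = Suc (length P))" if "length P = n - 1" for P
      using nh0 that assms(4) by auto
    have three: False if v: "v \<in> V" and abc: "E v a" "E v b" "E v c" "a \<noteq> b" "a \<noteq> c" "b \<noteq> c" for v a b c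
    proof -
      obtain P where P: "is_path V E P" "length P = n - 1" "v \<notin> set P" using avoid v by blast
      have sP: "set P = V - {v}" using avoid_set[OF G P(1)] P assms(3) v by simp
      have "a \<in> set P" "b \<in> set P" "c \<in> set P" using abc sP inV irr by auto
      then obtain ja jb jc where j: "ja < length P" "P!ja = a" "jb < length P" "P!jb = b" "jc < length P" "P!jc = c"
        by (metis in_set_conv_nth)
      have pa: "0 < ja \<and> Suc ja < length P" using nbr_pos[OF G P(1) v P(3) nh[OF P(2)]] j abc by auto
      have pb: "0 < jb \<and> Suc jb < length P" using nbr_pos[OF G P(1) v P(3) nh[OF P(2)]] j abc by auto
      have pc: "0 < jc \<and> Suc jc < length P" using nbr_pos[OF G P(1) v P(3) nh[OF P(2)]] j abc by auto
      have adj: "\<not> (x = Suc y)" if "x < length P" "E v (P!x)" "E v (P!y)" for x y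
        using nbr_adj[OF G P(1) v P(3) nh[OF P(2)], of y] that by auto
      have "ja \<noteq> Suc jb" "jb \<noteq> Suc ja" "ja \<noteq> Suc jc" "jc \<noteq> Suc ja" "jb \<noteq> Suc jc" "jc \<noteq> Suc jb"
        using adj j abc by metis+
      moreover have "ja \<noteq> jb" "ja \<noteq> jc" "jb \<noteq> jc" using j abc by auto
      ultimately show False using pa pb pc P(2) assms(5) by linarith
    qed
    have "V \<noteq> {}" using assms(3,4) by auto
    then obtain v where v: "v \<in> V" by blast
    obtain w where w: "w \<in> V" "w \<noteq> v"
    proof -
      have "\<not> V \<subseteq> {v}"
      proof
        assume "V \<subseteq> {v}"
        then have "card V \<le> card {v}" by (intro card_mono) auto
        then show False using assms(3,4) by simp
      qed
      then show ?thesis using that by blast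
    qed
    obtain xs where xs: "is_path V E xs" "hd xs = v" "last xs = w"
      using assms(2) v w unfolding connected_graph_def by blast
    have "Suc 0 < length xs"
    proof (rule ccontr)
      assume "\<not> Suc 0 < length xs"
      then have "length xs = 1" using xs(1) by (cases xs) (auto simp: is_path_def)
      then obtain x where "xs = [x]" by (metis One_nat_def length_0_conv length_Suc_conv)
      then show False using xs w by simp
    qed
    then have "E (xs!0) (xs!1)" using xs(1) by (simp add: is_path_def)
    moreover have "xs!0 = v" using xs(1,2) by (simp add: is_path_def hd_conv_nth)
    ultimately obtain u where u: "E v u" by auto
    obtain Q where Q: "is_path V E Q" "length Q = n - 1" "u \<notin> set Q" using avoid inV u by blast
    have sQ: "set Q = V - {u}" using avoid_set[OF G Q(1)] Q assms(3) inV u by simp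
    have "v \<in> set Q" using sQ v u irr by auto
    then obtain i where i: "i < length Q" "Q!i = v" by (metis in_set_conv_nth)
    have uV: "u \<in> V" using inV u by auto
    consider "i = 0" | "i = length Q - 1" | "0 < i" "Suc i < length Q" using i(1) by linarith
    then show False
    proof cases
      case 1
      have "hd Q = v" using 1 i Q(1) by (simp add: is_path_def hd_conv_nth)
      then have "is_path V E (u # Q)" using path_cons[OF Q(1) uV Q(3)] sym u by metis
      then show False using nh[OF Q(2)] by fastforce
    next
      case 2
      have "last Q = v" using 2 i Q(1) by (simp add: is_path_def last_conv_nth)
      then have "is_path V E (Q @ [u])" using path_snoc[OF Q(1) uV Q(3)] u by metis
      then show False using nh[OF Q(2)] by fastforce
    next
      case 3
      obtain k where k: "i = Suc k" using 3 by (cases i) auto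
      have e1: "E (Q!k) (Q!i)" using Q(1) 3 k unfolding is_path_def by auto
      have e2: "E (Q!i) (Q!Suc i)" using Q(1) 3 unfolding is_path_def by blast
      have ne: "Q!k \<noteq> Q!Suc i" using Q(1) 3 k unfolding is_path_def
        by (simp add: nth_eq_iff_index_eq)
      have "Q!k \<in> set Q" "Q!Suc i \<in> set Q" using 3 k by auto
      then have "Q!k \<noteq> u" "Q!Suc i \<noteq> u" using Q(3) by auto
      moreover have "E v (Q!k)" using e1 sym i(2) by auto
      moreover have "E v (Q!Suc i)" using e2 i(2) by auto
      ultimately show False using three[OF v u] ne by blast
    qed
  qed
  then obtain H where H: "is_path V E H" "length H = n" by blast
  have sH: "set H = V" using ham_set[OF G H(1)] H(2) assms(3) by simp
  show ?thesis unfolding psi_def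
  proof (rule Least_equality)
    show "\<exists>S. is_kpvc V E n S \<and> card S = 1"
    proof (intro exI conjI)
      show "is_kpvc V E n {hd H}" unfolding is_kpvc_def
      proof (intro conjI allI impI)
        show "{hd H} \<subseteq> V" using sH H(1) by (auto simp: is_path_def)
        fix ys assume "is_path V E ys \<and> length ys = n"
        then have "set ys = V" using ham_set[OF G] assms(3) by auto
        then show "set ys \<inter> {hd H} \<noteq> {}" using sH H(1) by (auto simp: is_path_def)
      qed
    qed simp
  next
    fix m assume "\<exists>S. is_kpvc V E n S \<and> card S = m"
    then obtain S where S: "is_kpvc V E n S" "card S = m" by blast
    show "1 \<le> m"
    proof (rule ccontr)
      assume "\<not> 1 \<le> m"
      moreover have "finite S" using S(1) fin unfolding is_kpvc_def by (auto intro: finite_subset)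
      ultimately have "card S = 0" "finite S" using S(2) by auto
      then have "S = {}" by simp
      then show False using S(1) H unfolding is_kpvc_def by auto
    qed
  qed
qed

end
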